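(* Let $r$ be a request whose underlying undirected graph of $G_r$ is a tree, and let $(x_r,\vec y_r,\vec z_r,\vec a_r)$ be a feasible solution of the LP relaxation of the multi-commodity flow formulation. Then the solution can be decomposed into a finite family $\mathcal D_r=\{(f^k_r,m^k_r)\}_k$ with weights $f^k_r>0$ and valid mappings $m^k_r\in\mathcal M_r$ such that (i) $x_r=\sum_kf^k_r$ and (ii) $a^{x,y}_r\ge\sum_kf^k_rA(m^k_r,x,y)$ for every resource $(x,y)\in R_S$.
   Context: Substrate: directed graph $G_S=(V_S,E_S)$, node types $\mathcal T$, $V_S^\tau\subseteq V_S$, node resources $R^V_S=\{(\tau,u):u\in V_S^\tau\}$, resources $R_S=R^V_S\cup E_S$, capacities $d_S(x,y)>0$. Request $r$: directed graph $G_r=(V_r,E_r)$, types $\tau_r$, demands $d_r(i),d_r(i,j)\ge0$, allowed node sets $V_S^{r,i}\subseteq V_S^{\tau_r(i)}$, allowed edge sets $E_S^{r,i,j}\subseteq E_S$. A valid mapping $m_r=(m^V_r,m^E_r)$: $m^V_r(i)\in V_S^{r,i}$; $m^E_r(i,j)$ the edge set of a directed path from $m^V_r(i)$ to $m^V_r(j)$ in $E_S^{r,i,j}$ (empty iff endpoints coincide); $\mathcal M_r$ the set of valid mappings; allocations $A(m_r,\tau,u)=\sum_{i:\tau_r(i)=\tau,m^V_r(i)=u}d_r(i)$, $A(m_r,u,v)=\sum_{(i,j):(u,v)\in m^E_r(i,j)}d_r(i,j)$. LP relaxation of the MCF formulation: variables $x_r\in[0,1]$, $y^u_{r,i}\in[0,1]$,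 $z^{u,v}_{r,i,j}\in[0,1]$, $a^{x,y}_r\ge 0$, constraints $\sum_{u\in V_S^{r,i}}y^u_{r,i}=x_r$ for all $i$; $y^u_{r,i}=0$ for $u\notin V_S^{r,i}$; $\sum_{(u,v)\in E_S}z^{u,v}_{r,i,j}-\sum_{(v,u)\in E_S}z^{v,u}_{r,i,j}=y^u_{r,i}-y^u_{r,j}$ for all $(i,j)\in E_r,u\in V_S$; $z^{u,v}_{r,i,j}=0$ for $(u,v)\notin E_S^{r,i,j}$; $a^{u,v}_r=\sum_{(i,j)}d_r(i,j)z^{u,v}_{r,i,j}$; $a^{\tau,u}_r=\sum_{i:\tau_r(i)=\tau}d_r(i)y^u_{r,i}$; $\sum_ra^{x,y}_r\le d_S(x,y)$. *)

theory Defs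
  imports Complex_Main
begin

text \<open>Underlying undirected graph of a directed graph (V,E) is a tree:
  nonempty, connected (in the symmetric closure), and acyclic, where acyclicity of
  the underlying undirected multigraph is expressed as: every edge is a bridge, i.e.
  after deleting the edge its endpoints are no longer connected (this also rules out
  self-loops and pairs of antiparallel edges, which form cycles in the underlying
  undirected multigraph).\<close>
definition undirected_tree :: "'n set \<Rightarrow> ('n \<times> 'n) set \<Rightarrow> bool" where
  "undirected_tree V E \<longleftrightarrow>
     finite V \<and> V \<noteq> {} \<and> E \<subseteq> V \<times> V \<and>
     (\<forall>i\<in>V. \<forall>j\<in>V. (i, j) \<in> (E \<union> E\<inverse>)\<^sup>*) \<and>
     (\<forall>(i,j)\<in>E. (i, j) \<notin> ((E - {(i,j)}) \<union> (E - {(i,j)})\<inverse>)\<^sup>*)"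

definition is_path_edges :: "('v \<times> 'v) set \<Rightarrow> 'v \<Rightarrow> 'v \<Rightarrow> ('v \<times> 'v) set \<Rightarrow> bool" where
  "is_path_edges F u v P \<longleftrightarrow>
     (\<exists>p. p \<noteq> [] \<and> distinct p \<and> hd p = u \<and> last p = v \<and>
          set (zip p (tl p)) \<subseteq> F \<and> P = set (zip p (tl p)))"

definition valid_mapping ::
  "'n set \<Rightarrow> ('n \<times> 'n) set \<Rightarrow> ('n \<Rightarrow> 'v set) \<Rightarrow> ('n \<times> 'n \<Rightarrow> ('v \<times> 'v) set)
   \<Rightarrow> ('n \<Rightarrow> 'v) \<times> ('n \<times> 'n \<Rightarrow> ('v \<times> 'v) set) \<Rightarrow> bool" where
  "valid_mapping Vr Er Vallow Eallow m \<longleftrightarrow>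
     (\<forall>i\<in>Vr. fst m i \<in> Vallow i) \<and>
     (\<forall>(i,j)\<in>Er. is_path_edges (Eallow (i,j)) (fst m i) (fst m j) (snd m (i,j)))"

definition alloc_node ::
  "'n set \<Rightarrow> ('n \<Rightarrow> 't) \<Rightarrow> ('n \<Rightarrow> real)
   \<Rightarrow> ('n \<Rightarrow> 'v) \<times> ('n \<times> 'n \<Rightarrow> ('v \<times> 'v) set) \<Rightarrow> 't \<Rightarrow> 'v \<Rightarrow> real" where
  "alloc_node Vr tr dV m t u = (\<Sum>i\<in>{i\<in>Vr. tr i = t \<and> fst m i = u}. dV i)"

definition alloc_edge ::
  "('n \<times> 'n) set \<Rightarrow> ('n \<times> 'n \<Rightarrow> real)
   \<Rightarrow> ('n \<Rightarrow> 'v) \<times> ('n \<times> 'n \<Rightarrow> ('v \<times> 'v) set) \<Rightarrow> 'v \<times> 'v \<Rightarrow> real" where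
  "alloc_edge Er dE m e = (\<Sum>ij\<in>{ij\<in>Er. e \<in> snd m ij}. dE ij)"

text \<open>Feasibility of (x, y, z, a) for the per-request constraints of the LP relaxation
  of the MCF formulation (the coupling capacity constraints sum_r a_r \<le> d_S are not
  needed).\<close>
definition mcf_lp_feasible ::
  "'v set \<Rightarrow> ('v \<times> 'v) set \<Rightarrow> 't set \<Rightarrow> ('t \<Rightarrow> 'v set)
   \<Rightarrow> 'n set \<Rightarrow> ('n \<times> 'n) set \<Rightarrow> ('n \<Rightarrow> 't) \<Rightarrow> ('n \<Rightarrow> real) \<Rightarrow> ('n \<times> 'n \<Rightarrow> real)
   \<Rightarrow> ('n \<Rightarrow> 'v set) \<Rightarrow> ('n \<times> 'n \<Rightarrow> ('v \<times> 'v) set)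
   \<Rightarrow> real \<Rightarrow> ('n \<Rightarrow> 'v \<Rightarrow> real) \<Rightarrow> ('n \<times> 'n \<Rightarrow> 'v \<times> 'v \<Rightarrow> real)
   \<Rightarrow> ('t \<Rightarrow> 'v \<Rightarrow> real) \<Rightarrow> ('v \<times> 'v \<Rightarrow> real) \<Rightarrow> bool" where
  "mcf_lp_feasible VS ES T VSt Vr Er tr dV dE Vallow Eallow x y z aN aE \<longleftrightarrow>
     0 \<le> x \<and> x \<le> 1 \<and>
     (\<forall>i\<in>Vr. \<forall>u\<in>VS. 0 \<le> y i u \<and> y i u \<le> 1) \<and>
     (\<forall>ij\<in>Er. \<forall>e\<in>ES. 0 \<le> z ij e \<and> z ij e \<le> 1) \<and>
     (\<forall>t\<in>T. \<forall>u\<in>VSt t. 0 \<le> aN t u) \<and>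
     (\<forall>e\<in>ES. 0 \<le> aE e) \<and>
     (\<forall>i\<in>Vr. (\<Sum>u\<in>Vallow i. y i u) = x) \<and>
     (\<forall>i\<in>Vr. \<forall>u\<in>VS - Vallow i. y i u = 0) \<and>
     (\<forall>(i,j)\<in>Er. \<forall>u\<in>VS.
        (\<Sum>e\<in>{e\<in>ES. fst e = u}. z (i,j) e) - (\<Sum>e\<in>{e\<in>ES. snd e = u}. z (i,j) e)
          = y i u - y j u) \<and>
     (\<forall>ij\<in>Er. \<forall>e\<in>ES - Eallow ij. z ij e = 0) \<and>
     (\<forall>e\<in>ES. aE e = (\<Sum>ij\<in>Er. dE ij * z ij e)) \<and>
     (\<forall>t\<in>T. \<forall>u\<in>VSt t. aN t u = (\<Sum>i\<in>{i\<in>Vr. tr i = t}. dV i * y i u))"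

end

theory Submission
  imports Defs "HOL-Library.Transitive_Closure_Table"
begin

lemma rpath_zip:
  "rtrancl_path r x xs y \<Longrightarrow> last (x # xs) = y \<and> set (zip (x # xs) xs) \<subseteq> {(a,b). r a b}"
  by (induction rule: rtrancl_path.induct) auto

lemma rtrancl_is_path:
  assumes "(u, w) \<in> F\<^sup>*"
  shows "\<exists>P. is_path_edges F u w P"
proof -
  have "(\<lambda>a b. (a,b) \<in> F)\<^sup>*\<^sup>* u w" using assms by (simp add: rtrancl_def)
  then obtain xs where "rtrancl_path (\<lambda>a b. (a,b) \<in> F) u xs w"
    using rtranclp_eq_rtrancl_path by metis
  then obtain xs' where p: "rtrancl_path (\<lambda>a b. (a,b) \<in> F) u xs' w" "distinct (u # xs')"
    using rtrancl_path_distinct by metis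
  from rpath_zip[OF p(1)] p(2) show ?thesis
    unfolding is_path_edges_def by (intro exI[of _ "set (zip (u#xs') xs')"] exI[of _ "u#xs'"]) auto
qed

lemma is_path_edges_mono: "is_path_edges F u v P \<Longrightarrow> F \<subseteq> G \<Longrightarrow> is_path_edges G u v P"
  unfolding is_path_edges_def by blast

lemma is_path_edges_sub: "is_path_edges F u v P \<Longrightarrow> P \<subseteq> F \<and> finite P"
  unfolding is_path_edges_def by auto

lemma telescope: "p \<noteq> [] \<Longrightarrow>
  (\<Sum>e\<leftarrow>zip p (tl p). (if fst e = u then c else 0) - (if snd e = u then c else 0))
   = (if hd p = u then c else 0) - (if last p = u then (c::real) else 0)"
proof (induction p)
  case Nil then show ?case by simp
next
  case (Cons a p)
  then show ?case by (cases p) auto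
qed

lemma path_balance:
  assumes "is_path_edges F a b P" "P \<subseteq> ES" "finite ES"
  shows "(\<Sum>e\<in>{e\<in>ES. fst e = u}. if e \<in> P then c else 0) - (\<Sum>e\<in>{e\<in>ES. snd e = u}. if e \<in> P then c else 0)
     = (if u = a then c else 0) - (if u = b then (c::real) else 0)"
proof -
  obtain p where p: "p \<noteq> []" "distinct p" "hd p = a" "last p = b" "P = set (zip p (tl p))"
    using assms(1) unfolding is_path_edges_def by blast
  have fin: "finite P" using assms(2,3) finite_subset by blast
  have 1: "(\<Sum>e\<in>{e\<in>ES. fst e = u}. if e \<in> P then c else 0) = (\<Sum>e\<in>P. if fst e = u then c else 0)"
  proof -
    have "(\<Sum>e\<in>{e\<in>ES. fst e = u}. if e \<in> P then c else 0) = (\<Sum>e\<in>{e\<in>ES. fst e = u} \<inter> P. c)"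
      using sym[OF sum.inter_restrict[OF finite_subset[OF _ assms(3)], of "{e\<in>ES. fst e = u}" "\<lambda>_. c" P]] by blast
    also have "{e\<in>ES. fst e = u} \<inter> P = {e\<in>P. fst e = u}" using assms(2) by auto
    also have "(\<Sum>e\<in>{e\<in>P. fst e = u}. c) = (\<Sum>e\<in>P. if fst e = u then c else 0)"
      by (simp only: sum.inter_filter[OF fin])
    finally show ?thesis .
  qed
  have 2: "(\<Sum>e\<in>{e\<in>ES. snd e = u}. if e \<in> P then c else 0) = (\<Sum>e\<in>P. if snd e = u then c else 0)"
  proof -
    have "(\<Sum>e\<in>{e\<in>ES. snd e = u}. if e \<in> P then c else 0) = (\<Sum>e\<in>{e\<in>ES. snd e = u} \<inter> P. c)"
      using sym[OF sum.inter_restrict[OF finite_subset[OF _ assms(3)], of "{e\<in>ES. snd e = u}" "\<lambda>_. c" P]] by blast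
    also have "{e\<in>ES. snd e = u} \<inter> P = {e\<in>P. snd e = u}" using assms(2) by auto
    also have "(\<Sum>e\<in>{e\<in>P. snd e = u}. c) = (\<Sum>e\<in>P. if snd e = u then c else 0)"
      by (simp only: sum.inter_filter[OF fin])
    finally show ?thesis .
  qed
  have dz: "distinct (zip p (tl p))" using p(2) by (rule distinct_zipI1)
  have "(\<Sum>e\<in>P. if fst e = u then c else 0) - (\<Sum>e\<in>P. if snd e = u then c else 0)
      = (\<Sum>e\<in>P. (if fst e = u then c else 0) - (if snd e = u then c else 0))"
    by (simp add: sum_subtractf)
  also have "\<dots> = (\<Sum>e\<leftarrow>zip p (tl p). (if fst e = u then c else 0) - (if snd e = u then c else 0))"
    unfolding p(5) using dz by (simp add: sum_list_distinct_conv_sum_set)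
  also have "\<dots> = (if hd p = u then c else 0) - (if last p = u then c else 0)"
    by (rule telescope[OF p(1)])
  finally show ?thesis using 1 2 p(3,4) by simp
qed

lemma flow_reach:
  fixes g :: "'v \<times> 'v \<Rightarrow> real" and b1 b2 :: "'v \<Rightarrow> real"
  assumes fin: "finite VS" and ES: "ES \<subseteq> VS \<times> VS"
    and g0: "\<forall>e\<in>ES. 0 \<le> g e" and b10: "\<forall>w\<in>VS. 0 \<le> b1 w" and b20: "\<forall>w\<in>VS. 0 \<le> b2 w"
    and cons: "\<forall>w\<in>VS. (\<Sum>e\<in>{e\<in>ES. fst e = w}. g e) - (\<Sum>e\<in>{e\<in>ES. snd e = w}. g e) = b1 w - b2 w"
    and u: "u \<in> VS" "b1 u > 0"
  shows "\<exists>w\<in>VS. b2 w > 0 \<and> (u, w) \<in> {e\<in>ES. g e > 0}\<^sup>*"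
proof (rule ccontr)
  assume neg: "\<not> ?thesis"
  define R where "R = {w\<in>VS. (u, w) \<in> {e\<in>ES. g e > 0}\<^sup>*}"
  have finES: "finite ES" using fin ES finite_subset finite_cartesian_product by blast
  have finR: "finite R" using fin unfolding R_def by simp
  have uR: "u \<in> R" using u unfolding R_def by simp
  have b2R: "\<forall>w\<in>R. b2 w = 0" using neg b20 unfolding R_def by force
  have closed: "\<And>e. e \<in> ES \<Longrightarrow> fst e \<in> R \<Longrightarrow> g e > 0 \<Longrightarrow> snd e \<in> R"
  proof -
    fix e assume e: "e \<in> ES" "fst e \<in> R" "g e > 0"
    then have "(u, fst e) \<in> {e\<in>ES. g e > 0}\<^sup>*" unfolding R_def by simp
    moreover have "(fst e, snd e) \<in> {e\<in>ES. g e > 0}" using e by simp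
    ultimately have "(u, snd e) \<in> {e\<in>ES. g e > 0}\<^sup>*" by (rule rtrancl_into_rtrancl)
    moreover have "snd e \<in> VS" using e ES by auto
    ultimately show "snd e \<in> R" unfolding R_def by simp
  qed
  have sw: "\<And>h. (\<Sum>w\<in>R. (\<Sum>e\<in>{e\<in>ES. h e = w}. g e)) = (\<Sum>e\<in>ES. if h e \<in> R then g e else 0)"
  proof -
    fix h :: "'v \<times> 'v \<Rightarrow> 'v"
    have "(\<Sum>w\<in>R. (\<Sum>e\<in>{e\<in>ES. h e = w}. g e)) = (\<Sum>w\<in>R. (\<Sum>e\<in>ES. if h e = w then g e else 0))"
      using finES by (simp add: sum.inter_filter)
    also have "\<dots> = (\<Sum>e\<in>ES. (\<Sum>w\<in>R. if h e = w then g e else 0))"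
      by (rule sum.swap)
    also have "\<dots> = (\<Sum>e\<in>ES. if h e \<in> R then g e else 0)"
      using finR by (simp add: sum.delta)
    finally show "(\<Sum>w\<in>R. (\<Sum>e\<in>{e\<in>ES. h e = w}. g e)) = (\<Sum>e\<in>ES. if h e \<in> R then g e else 0)" .
  qed
  have "(\<Sum>w\<in>R. b1 w - b2 w) = (\<Sum>w\<in>R. (\<Sum>e\<in>{e\<in>ES. fst e = w}. g e) - (\<Sum>e\<in>{e\<in>ES. snd e = w}. g e))"
    using cons unfolding R_def by (intro sum.cong) auto
  also have "\<dots> = (\<Sum>e\<in>ES. if fst e \<in> R then g e else 0) - (\<Sum>e\<in>ES. if snd e \<in> R then g e else 0)"
    by (simp add: sum_subtractf sw)
  also have "\<dots> = (\<Sum>e\<in>ES. (if fst e \<in> R then g e else 0) - (if snd e \<in> R then g e else 0))"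
    by (simp add: sum_subtractf)
  also have "\<dots> \<le> 0"
  proof (rule sum_nonpos)
    fix e assume e: "e \<in> ES"
    show "(if fst e \<in> R then g e else 0) - (if snd e \<in> R then g e else 0) \<le> 0"
      using closed[OF e] g0 e by (cases "g e > 0") auto
  qed
  finally have le: "(\<Sum>w\<in>R. b1 w - b2 w) \<le> 0" .
  have "(\<Sum>w\<in>R. b1 w - b2 w) = (\<Sum>w\<in>R. b1 w)" using b2R by simp
  also have "\<dots> \<ge> b1 u" using finR uR b10 unfolding R_def by (intro member_le_sum) auto
  finally show False using le u by simp
qed

lemma flow_reach_back:
  fixes g :: "'v \<times> 'v \<Rightarrow> real" and b1 b2 :: "'v \<Rightarrow> real"
  assumes fin: "finite VS" and ES: "ES \<subseteq> VS \<times> VS"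
    and g0: "\<forall>e\<in>ES. 0 \<le> g e" and b10: "\<forall>w\<in>VS. 0 \<le> b1 w" and b20: "\<forall>w\<in>VS. 0 \<le> b2 w"
    and cons: "\<forall>w\<in>VS. (\<Sum>e\<in>{e\<in>ES. fst e = w}. g e) - (\<Sum>e\<in>{e\<in>ES. snd e = w}. g e) = b1 w - b2 w"
    and v: "v \<in> VS" "b2 v > 0"
  shows "\<exists>w\<in>VS. b1 w > 0 \<and> (w, v) \<in> {e\<in>ES. g e > 0}\<^sup>*"
proof -
  define g' where "g' = (\<lambda>e. g (prod.swap e))"
  have re: "(\<Sum>e\<in>{e\<in>ES\<inverse>. h e = w}. g' e) = (\<Sum>e\<in>{e\<in>ES. h (prod.swap e) = w}. g e)"
    for h :: "'v \<times> 'v \<Rightarrow> 'v" and w :: 'v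
  proof -
    have "{e\<in>ES\<inverse>. h e = w} = prod.swap ` {e\<in>ES. h (prod.swap e) = w}" by force
    then show ?thesis
      unfolding g'_def by (simp add: sum.reindex)
  qed
  have cons': "\<forall>w\<in>VS. (\<Sum>e\<in>{e\<in>ES\<inverse>. fst e = w}. g' e) - (\<Sum>e\<in>{e\<in>ES\<inverse>. snd e = w}. g' e) = b2 w - b1 w"
  proof
    fix w assume w: "w \<in> VS"
    have e1: "(\<Sum>e\<in>{e\<in>ES\<inverse>. fst e = w}. g' e) = (\<Sum>e\<in>{e\<in>ES. snd e = w}. g e)"
      using re[of fst w] by simp
    have e2: "(\<Sum>e\<in>{e\<in>ES\<inverse>. snd e = w}. g' e) = (\<Sum>e\<in>{e\<in>ES. fst e = w}. g e)"
      using re[of snd w] by simp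
    have c: "(\<Sum>e\<in>{e\<in>ES. fst e = w}. g e) - (\<Sum>e\<in>{e\<in>ES. snd e = w}. g e) = b1 w - b2 w"
      using cons w by blast
    show "(\<Sum>e\<in>{e\<in>ES\<inverse>. fst e = w}. g' e) - (\<Sum>e\<in>{e\<in>ES\<inverse>. snd e = w}. g' e) = b2 w - b1 w"
      using e1 e2 c by linarith
  qed
  have "\<exists>w\<in>VS. b1 w > 0 \<and> (v, w) \<in> {e\<in>ES\<inverse>. g' e > 0}\<^sup>*"
    by (rule flow_reach[OF fin _ _ b20 b10 cons' v]) (use ES g0 in \<open>auto simp: g'_def\<close>)
  moreover have "{e\<in>ES\<inverse>. g' e > 0} = {e\<in>ES. g e > 0}\<inverse>" unfolding g'_def by auto
  ultimately show ?thesis by (simp add: rtrancl_converse)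
qed

lemma sym_rtrancl: "(a, b) \<in> (R \<union> R\<inverse>)\<^sup>* \<Longrightarrow> (b, a) \<in> (R \<union> R\<inverse>)\<^sup>*"
proof -
  assume "(a, b) \<in> (R \<union> R\<inverse>)\<^sup>*"
  then have "(b, a) \<in> ((R \<union> R\<inverse>)\<inverse>)\<^sup>*" by (simp add: rtrancl_converse)
  moreover have "(R \<union> R\<inverse>)\<inverse> = R \<union> R\<inverse>" by auto
  ultimately show ?thesis by simp
qed

lemma crossing: "(a, b) \<in> R\<^sup>* \<Longrightarrow> a \<in> S \<Longrightarrow> b \<notin> S \<Longrightarrow> \<exists>p q. (p, q) \<in> R \<and> p \<in> S \<and> q \<notin> S"
proof (induction rule: rtrancl_induct)
  case base then show ?case by simp
next
  case (step y z)
  then show ?case by (cases "y \<in> S") auto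
qed

lemma tree_noloop: "undirected_tree V E \<Longrightarrow> (i, i) \<notin> E"
  unfolding undirected_tree_def by blast

lemma tree_unique:
  assumes tree: "undirected_tree V E"
    and conn: "\<forall>a\<in>S. \<forall>b\<in>S. (a, b) \<in> ((E \<inter> S \<times> S) \<union> (E \<inter> S \<times> S)\<inverse>)\<^sup>*"
    and q: "q \<notin> S" and p: "p \<in> S" and b: "b \<in> S"
    and e: "e \<in> E" "e = (p, q) \<or> e = (q, p)"
    and e': "e' \<in> E" "e' = (b, q) \<or> e' = (q, b)"
  shows "e' = e"
proof (rule ccontr)
  assume ne: "e' \<noteq> e"
  define E0 where "E0 = E - {e}"
  have sub: "(E \<inter> S \<times> S) \<union> (E \<inter> S \<times> S)\<inverse> \<subseteq> E0 \<union> E0\<inverse>"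
    using e q unfolding E0_def by auto
  have "(p, b) \<in> (E0 \<union> E0\<inverse>)\<^sup>*" using conn p b rtrancl_mono[OF sub] by blast
  moreover have "(b, q) \<in> E0 \<union> E0\<inverse>" using e' ne unfolding E0_def by auto
  ultimately have pq: "(p, q) \<in> (E0 \<union> E0\<inverse>)\<^sup>*" by (rule rtrancl_into_rtrancl)
  then have qp: "(q, p) \<in> (E0 \<union> E0\<inverse>)\<^sup>*" by (rule sym_rtrancl)
  have br: "\<forall>(i,j)\<in>E. (i, j) \<notin> ((E - {(i,j)}) \<union> (E - {(i,j)})\<inverse>)\<^sup>*"
    using tree unfolding undirected_tree_def by blast
  from e(2) show False
  proof
    assume "e = (p, q)" then show False using br e(1) pq unfolding E0_def by auto
  next
    assume "e = (q, p)" then show False using br e(1) qp unfolding E0_def by auto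
  qed
qed

lemma tree_assign:
  fixes V :: "'n set" and E :: "('n \<times> 'n) set" and OK :: "'n \<Rightarrow> 'v \<Rightarrow> bool"
    and Q :: "'n \<times> 'n \<Rightarrow> 'v \<Rightarrow> 'v \<Rightarrow> bool"
  assumes tree: "undirected_tree V E"
    and ex: "\<forall>i\<in>V. \<exists>u. OK i u"
    and fw: "\<forall>(i,j)\<in>E. \<forall>u. OK i u \<longrightarrow> (\<exists>v. OK j v \<and> Q (i,j) u v)"
    and bw: "\<forall>(i,j)\<in>E. \<forall>v. OK j v \<longrightarrow> (\<exists>u. OK i u \<and> Q (i,j) u v)"
  shows "\<exists>m. (\<forall>i\<in>V. OK i (m i)) \<and> (\<forall>(i,j)\<in>E. Q (i,j) (m i) (m j))"
proof -
  define conn where "conn S \<longleftrightarrow> (\<forall>a\<in>S. \<forall>b\<in>S. (a, b) \<in> ((E \<inter> S \<times> S) \<union> (E \<inter> S \<times> S)\<inverse>)\<^sup>*)" for S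
  define good where "good S m \<longleftrightarrow> (\<forall>i\<in>S. OK i (m i)) \<and> (\<forall>(i,j)\<in>E \<inter> S \<times> S. Q (i,j) (m i) (m j))"
    for S and m :: "'n \<Rightarrow> 'v"
  have finV: "finite V" and EV: "E \<subseteq> V \<times> V" and Vne: "V \<noteq> {}"
    and connV: "\<forall>i\<in>V. \<forall>j\<in>V. (i, j) \<in> (E \<union> E\<inverse>)\<^sup>*"
    using tree unfolding undirected_tree_def by auto
  have main: "\<forall>S m. card (V - S) = n \<longrightarrow> S \<subseteq> V \<longrightarrow> S \<noteq> {} \<longrightarrow> conn S \<longrightarrow> good S m
     \<longrightarrow> (\<exists>m. good V m)" for n
  proof (induction n)
    case 0
    show ?case
    proof (intro allI impI)
      fix S m assume "card (V - S) = 0" "S \<subseteq> V" "S \<noteq> {}" "conn S" "good S m"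
      then have "S = V" using finV by auto
      then show "\<exists>m. good V m" using \<open>good S m\<close> by blast
    qed
  next
    case (Suc n)
    show ?case
    proof (intro allI impI)
      fix S m assume c: "card (V - S) = Suc n" and SV: "S \<subseteq> V" and Sne: "S \<noteq> {}"
        and cS: "conn S" and gS: "good S m"
      obtain a where a: "a \<in> V" "a \<notin> S" using c by (metis Diff_iff card.empty ex_in_conv nat.distinct(1))
      obtain s where s: "s \<in> S" using Sne by blast
      have "(s, a) \<in> (E \<union> E\<inverse>)\<^sup>*" using connV s SV a by blast
      then have "\<exists>p q. (p, q) \<in> E \<union> E\<inverse> \<and> p \<in> S \<and> q \<notin> S"
        by (rule crossing[OF _ s a(2)])
      then obtain p q where pq: "(p, q) \<in> E \<union> E\<inverse>" "p \<in> S" "q \<notin> S"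
        by blast
      have qV: "q \<in> V" using pq EV by auto
      have okp: "OK p (m p)" using gS pq unfolding good_def by blast
      obtain e w where e: "e \<in> E" "(e = (p, q) \<and> Q e (m p) w) \<or> (e = (q, p) \<and> Q e w (m p))"
        and w: "OK q w"
      proof (cases "(p, q) \<in> E")
        case True
        then obtain v where "OK q v \<and> Q (p,q) (m p) v" using fw okp by blast
        then show ?thesis using that True by blast
      next
        case False
        then have qpE: "(q, p) \<in> E" using pq by auto
        then obtain u where "OK q u \<and> Q (q,p) u (m p)" using bw okp by blast
        then show ?thesis using that qpE by blast
      qed
      have epq: "e = (p, q) \<or> e = (q, p)" using e by blast
      define S' where "S' = insert q S"
      define m' where "m' = m(q := w)"
      have uniq: "e' = e" if "e' \<in> E" "e' = (b, q) \<or> e' = (q, b)" "b \<in> S" for e' b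
        using tree_unique[OF tree _ pq(3) pq(2) that(3) e(1) epq that(1,2)] cS unfolding conn_def by blast
      have "good S' m'"
        unfolding good_def
      proof (intro conjI ballI)
        fix i assume "i \<in> S'"
        then show "OK i (m' i)" using gS w pq(3) unfolding good_def S'_def m'_def by auto
      next
        fix ij assume ij: "ij \<in> E \<inter> S' \<times> S'"
        obtain i j where ijd: "ij = (i, j)" by fastforce
        have nl: "i \<noteq> j \<or> i \<notin> S'" using tree_noloop[OF tree] ij ijd by auto
        show "case ij of (i, j) \<Rightarrow> Q (i, j) (m' i) (m' j)"
        proof (cases "i = q \<or> j = q")
          case False
          then show ?thesis using ij ijd gS unfolding good_def S'_def m'_def by auto
        next
          case True
          then show ?thesis
          proof
            assume iq: "i = q"
            then have jS: "j \<in> S" "j \<noteq> q" using ij ijd nl unfolding S'_def by auto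
            have "(i, j) = e" using uniq[of "(i,j)" j] ij ijd iq jS by auto
            then have "e = (q, j)" "j = p" using iq epq pq by auto
            then show ?thesis using e ijd iq jS pq(3) unfolding m'_def by auto
          next
            assume jq: "j = q"
            then have iS: "i \<in> S" "i \<noteq> q" using ij ijd nl unfolding S'_def by auto
            have "(i, j) = e" using uniq[of "(i,j)" i] ij ijd jq iS by auto
            then have "e = (i, q)" "i = p" using jq epq pq by auto
            then show ?thesis using e ijd jq iS pq(3) unfolding m'_def by auto
          qed
        qed
      qed
      moreover have "conn S'"
      proof -
        let ?R = "\<lambda>S. (E \<inter> S \<times> S) \<union> (E \<inter> S \<times> S)\<inverse>"
        have mono: "?R S \<subseteq> ?R S'" unfolding S'_def by auto
        have old: "(a, b) \<in> (?R S')\<^sup>*" if "a \<in> S" "b \<in> S" for a b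
          using cS that rtrancl_mono[OF mono] unfolding conn_def by blast
        have qp: "(q, p) \<in> ?R S'" using e epq pq unfolding S'_def by auto
        have qb: "(q, b) \<in> (?R S')\<^sup>*" if "b \<in> S" for b
          using qp old[OF pq(2) that] by (meson converse_rtrancl_into_rtrancl)
        show ?thesis unfolding conn_def
        proof (intro ballI)
          fix a b assume "a \<in> S'" "b \<in> S'"
          then consider "a \<in> S" "b \<in> S" | "a = q" "b \<in> S" | "a \<in> S" "b = q" | "a = q" "b = q"
            unfolding S'_def by auto
          then show "(a, b) \<in> (?R S')\<^sup>*"
          proof cases
            case 1 then show ?thesis by (rule old)
          next
            case 2 then show ?thesis using qb by simp
          next
            case 3 then show ?thesis using sym_rtrancl[OF qb[OF 3(1)]] by simp
          next
            case 4 then show ?thesis by simp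
          qed
        qed
      qed
      moreover have "card (V - S') = n"
      proof -
        have "V - S' = (V - S) - {q}" unfolding S'_def by auto
        then show ?thesis using c qV pq(3) finV by simp
      qed
      moreover have "S' \<subseteq> V" "S' \<noteq> {}" using SV qV unfolding S'_def by auto
      ultimately show "\<exists>m. good V m" using Suc.IH by blast
    qed
  qed
  obtain r where r: "r \<in> V" using Vne by blast
  define m0 where "m0 = (\<lambda>i. SOME u. OK i u)"
  have "good {r} m0"
    unfolding good_def m0_def using ex r tree_noloop[OF tree, of r] by (auto intro: someI_ex)
  moreover have "conn {r}" unfolding conn_def by simp
  ultimately obtain m where "good V m" using main[of "card (V - {r})"] r by blast
  then have g: "(\<forall>i\<in>V. OK i (m i)) \<and> (\<forall>(i,j)\<in>E \<inter> V \<times> V. Q (i,j) (m i) (m j))"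
    unfolding good_def .
  have "E \<inter> V \<times> V = E" using EV by blast
  with g show ?thesis by (intro exI[of _ m]) simp
qed

lemma sum_list_swap:
  fixes c :: "'a \<Rightarrow> real" and D :: "(real \<times> 'm) list"
  shows "(\<Sum>(f, m)\<leftarrow>D. f * (\<Sum>i\<in>A. if P m i then c i else 0))
       = (\<Sum>i\<in>A. c i * (\<Sum>(f, m)\<leftarrow>D. if P m i then f else 0))"
proof (induction D)
  case Nil then show ?case by simp
next
  case (Cons fm D)
  obtain f m where fm: "fm = (f, m)" by fastforce
  have "(\<Sum>(f, m)\<leftarrow>fm # D. f * (\<Sum>i\<in>A. if P m i then c i else 0))
      = f * (\<Sum>i\<in>A. if P m i then c i else 0) + (\<Sum>i\<in>A. c i * (\<Sum>(f, m)\<leftarrow>D. if P m i then f else 0))"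
    using Cons fm by simp
  also have "\<dots> = (\<Sum>i\<in>A. c i * ((if P m i then f else 0) + (\<Sum>(f, m)\<leftarrow>D. if P m i then f else 0)))"
  proof -
    have h1: "f * (\<Sum>i\<in>A. if P m i then c i else 0) = (\<Sum>i\<in>A. c i * (if P m i then f else 0))"
      unfolding sum_distrib_left by (rule sum.cong) auto
    show ?thesis by (simp only: h1 sum.distrib[symmetric] distrib_left)
  qed
  also have "\<dots> = (\<Sum>i\<in>A. c i * (\<Sum>(f, m)\<leftarrow>fm # D. if P m i then f else 0))"
    using fm by simp
  finally show ?case .
qed

lemma alloc_node_alt:
  assumes "finite Vr"
  shows "alloc_node Vr tr dV m t u = (\<Sum>i\<in>{i\<in>Vr. tr i = t}. if fst m i = u then dV i else 0)"
proof -
  have "{i\<in>Vr. tr i = t \<and> fst m i = u} = {i\<in>{i\<in>Vr. tr i = t}. fst m i = u}" by auto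
  moreover have fin2: "finite {i\<in>Vr. tr i = t}" using assms by simp
  ultimately show ?thesis unfolding alloc_node_def using sum.inter_filter[OF fin2, of dV "\<lambda>i. fst m i = u"]
    by simp
qed

lemma alloc_edge_alt:
  assumes "finite Er"
  shows "alloc_edge Er dE m e = (\<Sum>ij\<in>Er. if e \<in> snd m ij then dE ij else 0)"
  unfolding alloc_edge_def using assms by (simp add: sum.inter_filter)

lemma core:
  fixes VS :: "'v set" and ES :: "('v \<times> 'v) set" and Vr :: "'n set" and Er :: "('n \<times> 'n) set"
    and Vallow :: "'n \<Rightarrow> 'v set" and Eallow :: "'n \<times> 'n \<Rightarrow> ('v \<times> 'v) set"
  assumes finVS: "finite VS" and ES: "ES \<subseteq> VS \<times> VS" and finVr: "finite Vr"
    and ErV: "Er \<subseteq> Vr \<times> Vr" and tree: "undirected_tree Vr Er"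
    and VA: "\<forall>i\<in>Vr. Vallow i \<subseteq> VS" and EA: "\<forall>ij\<in>Er. Eallow ij \<subseteq> ES"
  shows "\<And>x y z. (\<forall>i\<in>Vr. \<forall>u\<in>VS. 0 \<le> y i u) \<Longrightarrow> (\<forall>ij\<in>Er. \<forall>e\<in>ES. 0 \<le> z ij e) \<Longrightarrow>
    (\<forall>i\<in>Vr. (\<Sum>u\<in>Vallow i. y i u) = (x::real)) \<Longrightarrow> (\<forall>i\<in>Vr. \<forall>u\<in>VS - Vallow i. y i u = 0) \<Longrightarrow>
    (\<forall>(i,j)\<in>Er. \<forall>u\<in>VS.
        (\<Sum>e\<in>{e\<in>ES. fst e = u}. z (i,j) e) - (\<Sum>e\<in>{e\<in>ES. snd e = u}. z (i,j) e)
          = y i u - y j u) \<Longrightarrow>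
    (\<forall>ij\<in>Er. \<forall>e\<in>ES - Eallow ij. z ij e = 0) \<Longrightarrow>
    \<exists>D :: (real \<times> (('n \<Rightarrow> 'v) \<times> ('n \<times> 'n \<Rightarrow> ('v \<times> 'v) set))) list.
      (\<forall>(f, m)\<in>set D. f > 0 \<and> valid_mapping Vr Er Vallow Eallow m) \<and> x = (\<Sum>(f, m)\<leftarrow>D. f) \<and>
      (\<forall>i\<in>Vr. \<forall>u\<in>VS. (\<Sum>(f, m)\<leftarrow>D. if fst m i = u then f else 0) \<le> y i u) \<and>
      (\<forall>ij\<in>Er. \<forall>e\<in>ES. (\<Sum>(f, m)\<leftarrow>D. if e \<in> snd m ij then f else 0) \<le> z ij e)"
proof -
  define feas where "feas x y z \<longleftrightarrow> (\<forall>i\<in>Vr. \<forall>u\<in>VS. 0 \<le> y i u) \<and> (\<forall>ij\<in>Er. \<forall>e\<in>ES. 0 \<le> z ij e) \<and>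
    (\<forall>i\<in>Vr. (\<Sum>u\<in>Vallow i. y i u) = (x::real)) \<and> (\<forall>i\<in>Vr. \<forall>u\<in>VS - Vallow i. y i u = 0) \<and>
    (\<forall>(i,j)\<in>Er. \<forall>u\<in>VS.
        (\<Sum>e\<in>{e\<in>ES. fst e = u}. z (i,j) e) - (\<Sum>e\<in>{e\<in>ES. snd e = u}. z (i,j) e)
          = y i u - y j u) \<and>
    (\<forall>ij\<in>Er. \<forall>e\<in>ES - Eallow ij. z ij e = 0)"
    for x y z
  define concl where "concl x y z (D :: (real \<times> (('n \<Rightarrow> 'v) \<times> ('n \<times> 'n \<Rightarrow> ('v \<times> 'v) set))) list) \<longleftrightarrow>
      (\<forall>(f, m)\<in>set D. f > 0 \<and> valid_mapping Vr Er Vallow Eallow m) \<and> x = (\<Sum>(f, m)\<leftarrow>D. f) \<and>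
      (\<forall>i\<in>Vr. \<forall>u\<in>VS. (\<Sum>(f, m)\<leftarrow>D. if fst m i = u then f else 0) \<le> y i u) \<and>
      (\<forall>ij\<in>Er. \<forall>e\<in>ES. (\<Sum>(f, m)\<leftarrow>D. if e \<in> snd m ij then f else 0) \<le> z ij e)"
    for x y z D
  define Sy where "Sy y = {(i,u)\<in>Vr \<times> VS. y i u \<noteq> (0::real)}" for y
  define Sz where "Sz z = {(ij,e)\<in>Er \<times> ES. z ij e \<noteq> (0::real)}" for z
  have finES: "finite ES" using finVS ES finite_subset finite_cartesian_product by blast
  have finSy: "finite (Sy y)" for y unfolding Sy_def
    by (rule finite_subset[of _ "Vr \<times> VS"]) (use finVr finVS in auto)
  have finSz: "finite (Sz z)" for z unfolding Sz_def
    by (rule finite_subset[of _ "Er \<times> ES"]) (use finVr ErV finES finite_subset in \<open>auto intro: finite_subset[OF ErV]\<close>)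
  have Vne: "Vr \<noteq> {}" using tree unfolding undirected_tree_def by auto
  have main: "\<forall>x y z. card (Sy y) + card (Sz z) = n \<longrightarrow> feas x y z \<longrightarrow> (\<exists>D. concl x y z D)" for n
  proof (induction n rule: less_induct)
    case (less n)
    show ?case
    proof (intro allI impI)
      fix x y z assume nn: "card (Sy y) + card (Sz z) = n" and fe: "feas x y z"
      note F = fe[unfolded feas_def]
      have y0: "\<forall>i\<in>Vr. \<forall>u\<in>VS. 0 \<le> y i u" and z0: "\<forall>ij\<in>Er. \<forall>e\<in>ES. 0 \<le> z ij e"
        and ysum: "\<forall>i\<in>Vr. (\<Sum>u\<in>Vallow i. y i u) = x" and yout: "\<forall>i\<in>Vr. \<forall>u\<in>VS - Vallow i. y i u = 0"
        and cons: "\<forall>(i,j)\<in>Er. \<forall>u\<in>VS.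
          (\<Sum>e\<in>{e\<in>ES. fst e = u}. z (i,j) e) - (\<Sum>e\<in>{e\<in>ES. snd e = u}. z (i,j) e) = y i u - y j u"
        and zout: "\<forall>ij\<in>Er. \<forall>e\<in>ES - Eallow ij. z ij e = 0"
        using F by blast+
      obtain r where r: "r \<in> Vr" using Vne by blast
      have finA: "finite (Vallow i)" if "i \<in> Vr" for i using VA that finVS finite_subset by blast
      have "x \<ge> 0" using ysum r y0 VA by (metis subsetD sum_nonneg)
      show "\<exists>D. concl x y z D"
      proof (cases "x = 0")
        case True
        then show ?thesis unfolding concl_def using y0 z0 by (intro exI[of _ "[]"]) auto
      next
        case False
        with \<open>x \<ge> 0\<close> have xpos: "x > 0" by simp
        define OK where "OK i u \<longleftrightarrow> u \<in> Vallow i \<and> y i u > 0" for i u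
        define Pos where "Pos ij = {e\<in>ES. z ij e > 0}" for ij
        define Q where "Q ij u v \<longleftrightarrow> (\<exists>P. is_path_edges (Pos ij) u v P)" for ij u v
        have ex: "\<forall>i\<in>Vr. \<exists>u. OK i u"
        proof
          fix i assume i: "i \<in> Vr"
          show "\<exists>u. OK i u"
          proof (rule ccontr)
            assume "\<not> (\<exists>u. OK i u)"
            then have "\<forall>u\<in>Vallow i. y i u \<le> 0" unfolding OK_def by auto
            then have "(\<Sum>u\<in>Vallow i. y i u) \<le> 0" by (simp add: sum_nonpos)
            then show False using ysum i xpos by auto
          qed
        qed
        have fw: "\<forall>(i,j)\<in>Er. \<forall>u. OK i u \<longrightarrow> (\<exists>v. OK j v \<and> Q (i,j) u v)"
        proof (clarify)
          fix i j u assume ij: "(i, j) \<in> Er" and ok: "OK i u"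
          have iV: "i \<in> Vr" and jV: "j \<in> Vr" using ij ErV by auto
          have uV: "u \<in> VS" using ok VA iV unfolding OK_def by auto
          have a1: "\<forall>e\<in>ES. 0 \<le> z (i,j) e" using z0 ij by blast
          have a2: "\<forall>w\<in>VS. 0 \<le> y i w" using y0 iV by blast
          have a3: "\<forall>w\<in>VS. 0 \<le> y j w" using y0 jV by blast
          have a4: "\<forall>w\<in>VS. (\<Sum>e\<in>{e\<in>ES. fst e = w}. z (i,j) e) - (\<Sum>e\<in>{e\<in>ES. snd e = w}. z (i,j) e) = y i w - y j w"
            using cons ij by fast
          have pz: "y i u > 0" using ok unfolding OK_def by simp
          obtain w where w: "w \<in> VS" "y j w > 0" "(u, w) \<in> {e\<in>ES. z (i,j) e > 0}\<^sup>*"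
            using flow_reach[OF finVS ES a1 a2 a3 a4 uV pz] by blast
          have "w \<in> Vallow j"
          proof (rule ccontr)
            assume "w \<notin> Vallow j"
            then have "y j w = 0" using yout jV w(1) by blast
            then show False using w(2) by simp
          qed
          moreover obtain P where "is_path_edges (Pos (i,j)) u w P"
            using rtrancl_is_path[OF w(3)] unfolding Pos_def by (elim exE)
          ultimately show "\<exists>v. OK j v \<and> Q (i,j) u v" unfolding OK_def Q_def using w by (intro exI conjI) auto
        qed
        have bw: "\<forall>(i,j)\<in>Er. \<forall>v. OK j v \<longrightarrow> (\<exists>u. OK i u \<and> Q (i,j) u v)"
        proof (clarify)
          fix i j v assume ij: "(i, j) \<in> Er" and ok: "OK j v"
          have iV: "i \<in> Vr" and jV: "j \<in> Vr" using ij ErV by auto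
          have vV: "v \<in> VS" using ok VA jV unfolding OK_def by auto
          have a1: "\<forall>e\<in>ES. 0 \<le> z (i,j) e" using z0 ij by blast
          have a2: "\<forall>w\<in>VS. 0 \<le> y i w" using y0 iV by blast
          have a3: "\<forall>w\<in>VS. 0 \<le> y j w" using y0 jV by blast
          have a4: "\<forall>w\<in>VS. (\<Sum>e\<in>{e\<in>ES. fst e = w}. z (i,j) e) - (\<Sum>e\<in>{e\<in>ES. snd e = w}. z (i,j) e) = y i w - y j w"
            using cons ij by fast
          have pz: "y j v > 0" using ok unfolding OK_def by simp
          obtain w where w: "w \<in> VS" "y i w > 0" "(w, v) \<in> {e\<in>ES. z (i,j) e > 0}\<^sup>*"
            using flow_reach_back[OF finVS ES a1 a2 a3 a4 vV pz] by blast
          have "w \<in> Vallow i"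
          proof (rule ccontr)
            assume "w \<notin> Vallow i"
            then have "y i w = 0" using yout iV w(1) by blast
            then show False using w(2) by simp
          qed
          moreover obtain P where "is_path_edges (Pos (i,j)) w v P"
            using rtrancl_is_path[OF w(3)] unfolding Pos_def by (elim exE)
          ultimately show "\<exists>u. OK i u \<and> Q (i,j) u v" unfolding OK_def Q_def using w by (intro exI conjI) auto
        qed
        obtain mV where mV: "\<forall>i\<in>Vr. OK i (mV i)" "\<forall>(i,j)\<in>Er. Q (i,j) (mV i) (mV j)"
          using tree_assign[OF tree ex fw bw] by blast
        define mE where "mE ij = (SOME P. is_path_edges (Pos ij) (mV (fst ij)) (mV (snd ij)) P)" for ij
        have mEp: "is_path_edges (Pos ij) (mV (fst ij)) (mV (snd ij)) (mE ij)" if "ij \<in> Er" for ij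
          using mV(2) that unfolding mE_def Q_def by (cases ij) (auto intro: someI_ex)
        have PosE: "Pos ij \<subseteq> Eallow ij" if "ij \<in> Er" for ij
          using zout that unfolding Pos_def by force
        have mEPos: "mE ij \<subseteq> Pos ij" and finmE: "finite (mE ij)" if "ij \<in> Er" for ij
          using is_path_edges_sub[OF mEp[OF that]] by auto
        have mEES: "mE ij \<subseteq> ES" if "ij \<in> Er" for ij using mEPos[OF that] unfolding Pos_def by auto
        define m where "m = (mV, mE)"
        have valid: "valid_mapping Vr Er Vallow Eallow m"
          unfolding valid_mapping_def m_def
          using mV(1) mEp is_path_edges_mono PosE unfolding OK_def by fastforce
        define Y where "Y = (\<lambda>i. y i (mV i)) ` Vr"
        define Z where "Z = (\<lambda>(ij, e). z ij e) ` (SIGMA ij:Er. mE ij)"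
        have finW: "finite (Y \<union> Z)" unfolding Y_def Z_def
          using finVr finmE finite_subset[OF ErV] by (auto intro!: finite_SigmaI)
        have Wne: "Y \<union> Z \<noteq> {}" unfolding Y_def using Vne by auto
        define f where "f = Min (Y \<union> Z)"
        have fin: "f \<in> Y \<union> Z" unfolding f_def using finW Wne by (rule Min_in)
        have fY: "f \<le> y i (mV i)" if "i \<in> Vr" for i
          unfolding f_def using finW that Y_def by (intro Min_le) auto
        have fZ: "f \<le> z ij e" if "ij \<in> Er" "e \<in> mE ij" for ij e
          unfolding f_def using finW that Z_def by (intro Min_le) force+
        have ypos: "y i (mV i) > 0" if "i \<in> Vr" for i using mV(1) that unfolding OK_def by auto
        have zpos: "z ij e > 0" if "ij \<in> Er" "e \<in> mE ij" for ij e
          using mEPos[OF that(1)] that(2) unfolding Pos_def by auto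
        have fpos: "f > 0" using fin ypos zpos unfolding Y_def Z_def by auto
        define y' where "y' i u = y i u - (if mV i = u then f else 0)" for i u
        define z' where "z' ij e = z ij e - (if e \<in> mE ij then f else 0)" for ij e
        define x' where "x' = x - f"
        have fe': "feas x' y' z'"
          unfolding feas_def
        proof (intro conjI)
          show "\<forall>i\<in>Vr. \<forall>u\<in>VS. 0 \<le> y' i u" unfolding y'_def using y0 fY by auto
          show "\<forall>ij\<in>Er. \<forall>e\<in>ES. 0 \<le> z' ij e" unfolding z'_def using z0 fZ by auto
          show "\<forall>i\<in>Vr. (\<Sum>u\<in>Vallow i. y' i u) = x'"
          proof
            fix i assume i: "i \<in> Vr"
            have "(\<Sum>u\<in>Vallow i. y' i u) = (\<Sum>u\<in>Vallow i. y i u) - (\<Sum>u\<in>Vallow i. if mV i = u then f else 0)"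
              unfolding y'_def by (simp add: sum_subtractf)
            also have "(\<Sum>u\<in>Vallow i. if mV i = u then f else 0) = f"
              using finA[OF i] mV(1) i unfolding OK_def by simp
            finally show "(\<Sum>u\<in>Vallow i. y' i u) = x'" using ysum i unfolding x'_def by simp
          qed
          show "\<forall>i\<in>Vr. \<forall>u\<in>VS - Vallow i. y' i u = 0"
            unfolding y'_def using yout mV(1) unfolding OK_def by auto
          show "\<forall>ij\<in>Er. \<forall>e\<in>ES - Eallow ij. z' ij e = 0"
            unfolding z'_def using zout mEPos PosE by fastforce
          show "\<forall>(i,j)\<in>Er. \<forall>u\<in>VS.
            (\<Sum>e\<in>{e\<in>ES. fst e = u}. z' (i,j) e) - (\<Sum>e\<in>{e\<in>ES. snd e = u}. z' (i,j) e) = y' i u - y' j u"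
          proof (clarify)
            fix i j u assume ij: "(i, j) \<in> Er" and u: "u \<in> VS"
            have pb: "(\<Sum>e\<in>{e\<in>ES. fst e = u}. if e \<in> mE (i,j) then f else 0)
                - (\<Sum>e\<in>{e\<in>ES. snd e = u}. if e \<in> mE (i,j) then f else 0)
                = (if u = mV i then f else 0) - (if u = mV j then f else 0)"
              using path_balance[OF mEp[OF ij] mEES[OF ij] finES] by simp
            have "(\<Sum>e\<in>{e\<in>ES. fst e = u}. z' (i,j) e) - (\<Sum>e\<in>{e\<in>ES. snd e = u}. z' (i,j) e)
              = ((\<Sum>e\<in>{e\<in>ES. fst e = u}. z (i,j) e) - (\<Sum>e\<in>{e\<in>ES. snd e = u}. z (i,j) e))
                - ((\<Sum>e\<in>{e\<in>ES. fst e = u}. if e \<in> mE (i,j) then f else 0)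
                - (\<Sum>e\<in>{e\<in>ES. snd e = u}. if e \<in> mE (i,j) then f else 0))"
              unfolding z'_def by (simp add: sum_subtractf)
            also have "\<dots> = y' i u - y' j u" using pb cons ij u unfolding y'_def by auto
            finally show "(\<Sum>e\<in>{e\<in>ES. fst e = u}. z' (i,j) e) - (\<Sum>e\<in>{e\<in>ES. snd e = u}. z' (i,j) e)
               = y' i u - y' j u" .
          qed
        qed
        have Sy_sub: "Sy y' \<subseteq> Sy y"
        proof
          fix p assume "p \<in> Sy y'"
          then obtain i u where p: "p = (i,u)" "i \<in> Vr" "u \<in> VS" "y' i u \<noteq> 0" unfolding Sy_def by auto
          have "y i u \<noteq> 0"
          proof
            assume y0': "y i u = 0"
            then have "mV i \<noteq> u" using ypos[OF p(2)] by auto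
            then show False using p(4) y0' unfolding y'_def by simp
          qed
          then show "p \<in> Sy y" unfolding Sy_def using p by simp
        qed
        have Sz_sub: "Sz z' \<subseteq> Sz z"
        proof
          fix p assume "p \<in> Sz z'"
          then obtain ij e where p: "p = (ij,e)" "ij \<in> Er" "e \<in> ES" "z' ij e \<noteq> 0" unfolding Sz_def by auto
          have "z ij e \<noteq> 0"
          proof
            assume z0': "z ij e = 0"
            then have "e \<notin> mE ij" using zpos[OF p(2), of e] by auto
            then show False using p(4) z0' unfolding z'_def by simp
          qed
          then show "p \<in> Sz z" unfolding Sz_def using p by simp
        qed
        have less_n: "card (Sy y') + card (Sz z') < n"
        proof -
          from fin show ?thesis
          proof
            assume "f \<in> Y"
            then obtain i where i: "i \<in> Vr" "f = y i (mV i)" unfolding Y_def by blast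
            have "(i, mV i) \<in> Sy y" "(i, mV i) \<notin> Sy y'"
              unfolding Sy_def y'_def using i ypos mV(1) VA unfolding OK_def by auto
            then have "Sy y' \<subset> Sy y" using Sy_sub by blast
            then have "card (Sy y') < card (Sy y)" by (rule psubset_card_mono[OF finSy])
            moreover have "card (Sz z') \<le> card (Sz z)" by (rule card_mono[OF finSz Sz_sub])
            ultimately show ?thesis using nn by simp
          next
            assume "f \<in> Z"
            then obtain ij e where ie: "ij \<in> Er" "e \<in> mE ij" "f = z ij e" unfolding Z_def by auto
            have "(ij, e) \<in> Sz z" "(ij, e) \<notin> Sz z'"
              unfolding Sz_def z'_def using ie zpos[OF ie(1,2)] mEES[OF ie(1)] by auto
            then have "Sz z' \<subset> Sz z" using Sz_sub by blast
            then have "card (Sz z') < card (Sz z)" by (rule psubset_card_mono[OF finSz])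
            moreover have "card (Sy y') \<le> card (Sy y)" by (rule card_mono[OF finSy Sy_sub])
            ultimately show ?thesis using nn by simp
          qed
        qed
        have IH': "\<exists>D. concl x' y' z' D" using less.IH[OF less_n] fe' by simp
        then obtain D' where D': "concl x' y' z' D'" by (elim exE)
        note D'u = D'[unfolded concl_def]
        have "concl x y z ((f, m) # D')"
          unfolding concl_def
        proof (intro conjI)
          show "\<forall>(f, m)\<in>set ((f, m) # D'). f > 0 \<and> valid_mapping Vr Er Vallow Eallow m"
            using D'u fpos valid by simp
          show "x = (\<Sum>(f, m)\<leftarrow>(f, m) # D'. f)" using D'u unfolding x'_def by simp
          show "\<forall>i\<in>Vr. \<forall>u\<in>VS. (\<Sum>(f, m)\<leftarrow>(f, m) # D'. if fst m i = u then f else 0) \<le> y i u"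
          proof (intro ballI)
            fix i u assume iu: "i \<in> Vr" "u \<in> VS"
            have "(\<Sum>(f, m)\<leftarrow>D'. if fst m i = u then f else 0) \<le> y' i u" using D'u iu by blast
            then show "(\<Sum>(f, m)\<leftarrow>(f, m) # D'. if fst m i = u then f else 0) \<le> y i u"
              unfolding y'_def m_def by simp
          qed
          show "\<forall>ij\<in>Er. \<forall>e\<in>ES. (\<Sum>(f, m)\<leftarrow>(f, m) # D'. if e \<in> snd m ij then f else 0) \<le> z ij e"
          proof (intro ballI)
            fix ij e assume iu: "ij \<in> Er" "e \<in> ES"
            have "(\<Sum>(f, m)\<leftarrow>D'. if e \<in> snd m ij then f else 0) \<le> z' ij e" using D'u iu by blast
            then show "(\<Sum>(f, m)\<leftarrow>(f, m) # D'. if e \<in> snd m ij then f else 0) \<le> z ij e"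
              unfolding z'_def m_def by simp
          qed
        qed
        then show ?thesis by blast
      qed
    qed
  qed
  fix x y z
  assume "(\<forall>i\<in>Vr. \<forall>u\<in>VS. 0 \<le> y i u)" "(\<forall>ij\<in>Er. \<forall>e\<in>ES. 0 \<le> z ij e)"
    "(\<forall>i\<in>Vr. (\<Sum>u\<in>Vallow i. y i u) = (x::real))" "(\<forall>i\<in>Vr. \<forall>u\<in>VS - Vallow i. y i u = 0)"
    "(\<forall>(i,j)\<in>Er. \<forall>u\<in>VS.
        (\<Sum>e\<in>{e\<in>ES. fst e = u}. z (i,j) e) - (\<Sum>e\<in>{e\<in>ES. snd e = u}. z (i,j) e)
          = y i u - y j u)"
    "(\<forall>ij\<in>Er. \<forall>e\<in>ES - Eallow ij. z ij e = 0)"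
  then have "feas x y z" unfolding feas_def by blast
  then obtain D where "concl x y z D" using main by blast
  then show "\<exists>D :: (real \<times> (('n \<Rightarrow> 'v) \<times> ('n \<times> 'n \<Rightarrow> ('v \<times> 'v) set))) list.
      (\<forall>(f, m)\<in>set D. f > 0 \<and> valid_mapping Vr Er Vallow Eallow m) \<and> x = (\<Sum>(f, m)\<leftarrow>D. f) \<and>
      (\<forall>i\<in>Vr. \<forall>u\<in>VS. (\<Sum>(f, m)\<leftarrow>D. if fst m i = u then f else 0) \<le> y i u) \<and>
      (\<forall>ij\<in>Er. \<forall>e\<in>ES. (\<Sum>(f, m)\<leftarrow>D. if e \<in> snd m ij then f else 0) \<le> z ij e)"
    unfolding concl_def by blast
qed

theorem lemma6:
  fixes VS :: "'v set" and ES :: "('v \<times> 'v) set"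
    and T :: "'t set" and VSt :: "'t \<Rightarrow> 'v set"
    and Vr :: "'n set" and Er :: "('n \<times> 'n) set" and tr :: "'n \<Rightarrow> 't"
    and dV :: "'n \<Rightarrow> real" and dE :: "'n \<times> 'n \<Rightarrow> real"
    and Vallow :: "'n \<Rightarrow> 'v set" and Eallow :: "'n \<times> 'n \<Rightarrow> ('v \<times> 'v) set"
    and x :: real and y :: "'n \<Rightarrow> 'v \<Rightarrow> real" and z :: "'n \<times> 'n \<Rightarrow> 'v \<times> 'v \<Rightarrow> real"
    and aN :: "'t \<Rightarrow> 'v \<Rightarrow> real" and aE :: "'v \<times> 'v \<Rightarrow> real"
  assumes substrate: "finite VS" "ES \<subseteq> VS \<times> VS" "finite T" "\<forall>t\<in>T. VSt t \<subseteq> VS"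
    and request: "finite Vr" "Er \<subseteq> Vr \<times> Vr" "\<forall>i\<in>Vr. tr i \<in> T"
      "\<forall>i\<in>Vr. 0 \<le> dV i" "\<forall>ij\<in>Er. 0 \<le> dE ij"
      "\<forall>i\<in>Vr. Vallow i \<subseteq> VSt (tr i)" "\<forall>ij\<in>Er. Eallow ij \<subseteq> ES"
    and tree: "undirected_tree Vr Er"
    and feasible: "mcf_lp_feasible VS ES T VSt Vr Er tr dV dE Vallow Eallow x y z aN aE"
  shows "\<exists>D :: (real \<times> (('n \<Rightarrow> 'v) \<times> ('n \<times> 'n \<Rightarrow> ('v \<times> 'v) set))) list.
           (\<forall>(f, m)\<in>set D. f > 0 \<and> valid_mapping Vr Er Vallow Eallow m) \<and>
           x = (\<Sum>(f, m)\<leftarrow>D. f) \<and>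
           (\<forall>t\<in>T. \<forall>u\<in>VSt t. aN t u \<ge> (\<Sum>(f, m)\<leftarrow>D. f * alloc_node Vr tr dV m t u)) \<and>
           (\<forall>e\<in>ES. aE e \<ge> (\<Sum>(f, m)\<leftarrow>D. f * alloc_edge Er dE m e))"
proof -
  note F = feasible[unfolded mcf_lp_feasible_def]
  have y0: "\<forall>i\<in>Vr. \<forall>u\<in>VS. 0 \<le> y i u" using F by blast
  have z0: "\<forall>ij\<in>Er. \<forall>e\<in>ES. 0 \<le> z ij e" using F by blast
  have ysum: "\<forall>i\<in>Vr. (\<Sum>u\<in>Vallow i. y i u) = x" using F by blast
  have yout: "\<forall>i\<in>Vr. \<forall>u\<in>VS - Vallow i. y i u = 0" using F by blast
  have cons: "\<forall>(i,j)\<in>Er. \<forall>u\<in>VS.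
        (\<Sum>e\<in>{e\<in>ES. fst e = u}. z (i,j) e) - (\<Sum>e\<in>{e\<in>ES. snd e = u}. z (i,j) e)
          = y i u - y j u" using F by blast
  have zout: "\<forall>ij\<in>Er. \<forall>e\<in>ES - Eallow ij. z ij e = 0" using F by blast
  have aEd: "\<forall>e\<in>ES. aE e = (\<Sum>ij\<in>Er. dE ij * z ij e)" using F by blast
  have aNd: "\<forall>t\<in>T. \<forall>u\<in>VSt t. aN t u = (\<Sum>i\<in>{i\<in>Vr. tr i = t}. dV i * y i u)" using F by blast
  have VA: "\<forall>i\<in>Vr. Vallow i \<subseteq> VS" using request(3,6) substrate(4) by blast
  have finEr: "finite Er" using request(1,2) finite_subset by blast
  obtain D :: "(real \<times> (('n \<Rightarrow> 'v) \<times> ('n \<times> 'n \<Rightarrow> ('v \<times> 'v) set))) list" where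
    D1: "\<forall>(f, m)\<in>set D. f > 0 \<and> valid_mapping Vr Er Vallow Eallow m" and D2: "x = (\<Sum>(f, m)\<leftarrow>D. f)"
    and D3: "\<forall>i\<in>Vr. \<forall>u\<in>VS. (\<Sum>(f, m)\<leftarrow>D. if fst m i = u then f else 0) \<le> y i u"
    and D4: "\<forall>ij\<in>Er. \<forall>e\<in>ES. (\<Sum>(f, m)\<leftarrow>D. if e \<in> snd m ij then f else 0) \<le> z ij e"
    using core[OF substrate(1,2) request(1,2) tree VA request(7) y0 z0 ysum yout cons zout] by blast
  have N: "aN t u \<ge> (\<Sum>(f, m)\<leftarrow>D. f * alloc_node Vr tr dV m t u)" if t: "t \<in> T" and u: "u \<in> VSt t" for t u
  proof -
    have uV: "u \<in> VS" using substrate(4) t u by blast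
    have "(\<Sum>(f, m)\<leftarrow>D. f * alloc_node Vr tr dV m t u)
        = (\<Sum>(f, m)\<leftarrow>D. f * (\<Sum>i\<in>{i\<in>Vr. tr i = t}. if fst m i = u then dV i else 0))"
      by (simp add: alloc_node_alt[OF request(1)])
    also have "\<dots> = (\<Sum>i\<in>{i\<in>Vr. tr i = t}. dV i * (\<Sum>(f, m)\<leftarrow>D. if fst m i = u then f else 0))"
      by (rule sum_list_swap)
    also have "\<dots> \<le> (\<Sum>i\<in>{i\<in>Vr. tr i = t}. dV i * y i u)"
      by (rule sum_mono, rule mult_left_mono) (use D3 uV request(4) in auto)
    also have "\<dots> = aN t u" using aNd t u by simp
    finally show ?thesis .
  qed
  have E: "aE e \<ge> (\<Sum>(f, m)\<leftarrow>D. f * alloc_edge Er dE m e)" if e: "e \<in> ES" for e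
  proof -
    have "(\<Sum>(f, m)\<leftarrow>D. f * alloc_edge Er dE m e)
        = (\<Sum>(f, m)\<leftarrow>D. f * (\<Sum>ij\<in>Er. if e \<in> snd m ij then dE ij else 0))"
      by (simp add: alloc_edge_alt[OF finEr])
    also have "\<dots> = (\<Sum>ij\<in>Er. dE ij * (\<Sum>(f, m)\<leftarrow>D. if e \<in> snd m ij then f else 0))"
      by (rule sum_list_swap)
    also have "\<dots> \<le> (\<Sum>ij\<in>Er. dE ij * z ij e)"
      by (rule sum_mono, rule mult_left_mono) (use D4 e request(5) in auto)
    also have "\<dots> = aE e" using aEd e by simp
    finally show ?thesis .
  qed
  show ?thesis using D1 D2 N E by blast
qed

end
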